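(* Let $A\in\mathbb R^{N\times 2d}$ and let $K:\mathbb T^N\to\mathbb R^{2d}$ be continuous. Suppose that for every $\omega\in\mathbb T^N$ the map $x\mapsto\Phi(x,\omega)=x+K(\omega+Ax\bmod1)$ is a symplectic twist diffeomorphism of $\mathbb R^{2d}$. Then $\widehat\Phi(\cdot,\omega)-\mathrm{id}$ is quasiperiodic.
   Context: Points of $\mathbb R^{2d}$ are written $(q,p)$, $q,p\in\mathbb R^d$, symplectic form $\sum dq_i\wedge dp_i$; $\mathbb T^N=[0,1]^N$ with $0=1$. A symplectic diffeomorphism $\Phi=(Q,P)$ is twist if for every $p$ the map $q\mapsto Q(q,p)$ is a diffeomorphism of $\mathbb R^d$; $\hat q(Q,p)$ denotes its inverse, $\hat P(Q,p)=P(\hat q(Q,p),p)$, and $\widehat\Phi(Q,p)=(\hat q(Q,p),\hat P(Q,p))$. A function $g:\mathbb R^{2d}\to\mathbb R^{2d}$ is quasiperiodic if $g(x)=\gamma(c+Bx)$ for some $M$, some continuous $\mathbb Z^M$-periodic $\gamma:\mathbb R^M\to\mathbb R^{2d}$, some $c\in\mathbb R^M$ and some matrix $B\in\mathbb R^{M\times2d}$. *)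

theory Defs
  imports "HOL-Analysis.Analysis"
begin

text \<open>Points of R^{2d} are pairs (q,p) with q, p :: real^'d.\<close>

definition symp_form :: "(real^'d) \<times> (real^'d) \<Rightarrow> (real^'d) \<times> (real^'d) \<Rightarrow> real" where
  "symp_form u v = fst u \<bullet> snd v - snd u \<bullet> fst v"

definition C1_diffeo :: "('a::euclidean_space \<Rightarrow> 'a) \<Rightarrow> bool" where
  "C1_diffeo f \<longleftrightarrow> bij f
     \<and> (\<exists>f' :: 'a \<Rightarrow> 'a \<Rightarrow>\<^sub>L 'a. continuous_on UNIV f'
           \<and> (\<forall>x. (f has_derivative blinfun_apply (f' x)) (at x)))
     \<and> (\<exists>g' :: 'a \<Rightarrow> 'a \<Rightarrow>\<^sub>L 'a. continuous_on UNIV g'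
           \<and> (\<forall>x. (inv f has_derivative blinfun_apply (g' x)) (at x)))"

definition symplectic_diffeo :: "((real^'d) \<times> (real^'d) \<Rightarrow> (real^'d) \<times> (real^'d)) \<Rightarrow> bool" where
  "symplectic_diffeo f \<longleftrightarrow> C1_diffeo f
     \<and> (\<forall>x. \<forall>D. (f has_derivative D) (at x) \<longrightarrow> (\<forall>u v. symp_form (D u) (D v) = symp_form u v))"

definition symplectic_twist :: "((real^'d) \<times> (real^'d) \<Rightarrow> (real^'d) \<times> (real^'d)) \<Rightarrow> bool" where
  "symplectic_twist f \<longleftrightarrow> symplectic_diffeo f \<and> (\<forall>p. C1_diffeo (\<lambda>q. fst (f (q, p))))"

definition hat_q :: "((real^'d) \<times> (real^'d) \<Rightarrow> (real^'d) \<times> (real^'d)) \<Rightarrow> real^'d \<Rightarrow> real^'d \<Rightarrow> real^'d" where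
  "hat_q f Q p = inv (\<lambda>q. fst (f (q, p))) Q"

definition hat_P :: "((real^'d) \<times> (real^'d) \<Rightarrow> (real^'d) \<times> (real^'d)) \<Rightarrow> real^'d \<Rightarrow> real^'d \<Rightarrow> real^'d" where
  "hat_P f Q p = snd (f (hat_q f Q p, p))"

definition hat_Phi :: "((real^'d) \<times> (real^'d) \<Rightarrow> (real^'d) \<times> (real^'d)) \<Rightarrow> (real^'d) \<times> (real^'d) \<Rightarrow> (real^'d) \<times> (real^'d)" where
  "hat_Phi f y = (hat_q f (fst y) (snd y), hat_P f (fst y) (snd y))"

text \<open>Quasiperiodic: g x = gamma (c + B x) with gamma continuous and Z^M-periodic on R^M.
  R^M is represented as the functions nat \<Rightarrow> real vanishing from index M on
  (with the product topology, i.e. the Euclidean topology of R^M); B is given by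
  its rows b 0, ..., b (M-1).\<close>
definition quasiperiodic :: "('a::euclidean_space \<Rightarrow> 'b::topological_space) \<Rightarrow> bool" where
  "quasiperiodic g \<longleftrightarrow> (\<exists>(M::nat) (\<gamma>::(nat \<Rightarrow> real) \<Rightarrow> 'b) (c::nat \<Rightarrow> real) (b::nat \<Rightarrow> 'a).
     continuous_on {y. \<forall>i\<ge>M. y i = 0} \<gamma>
     \<and> (\<forall>y. (\<forall>i\<ge>M. y i = 0) \<longrightarrow> (\<forall>i<M. \<gamma> (y(i := y i + 1)) = \<gamma> y))
     \<and> (\<forall>x. g x = \<gamma> (\<lambda>i. if i < M then c i + b i \<bullet> x else 0)))"

end

theory Submission
  imports Defs
begin

lemma K_int_shift_nat:
  fixes K :: "real^'n::finite \<Rightarrow> 'b"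
  assumes "\<forall>\<omega> i. K (\<omega> + axis i 1) = K \<omega>"
  shows "K (\<omega> + real n *\<^sub>R axis i 1) = K \<omega>"
proof (induction n)
  case 0 then show ?case by simp
next
  case (Suc n)
  have "\<omega> + real (Suc n) *\<^sub>R axis i 1 = (\<omega> + real n *\<^sub>R axis i 1) + axis i 1"
    by (simp add: algebra_simps)
  then show ?case using assms Suc by metis
qed

lemma K_int_shift:
  fixes K :: "real^'n::finite \<Rightarrow> 'b"
  assumes per: "\<forall>\<omega> i. K (\<omega> + axis i 1) = K \<omega>"
  shows "K (\<omega> + of_int k *\<^sub>R axis i 1) = K \<omega>"
proof (cases "k \<ge> 0")
  case True
  then have "k = int (nat k)" by simp
  then show ?thesis using K_int_shift_nat[OF per, of \<omega> "nat k" i]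
    by (metis of_int_of_nat_eq)
next
  case False
  then have k: "k = - int (nat (-k))" by simp
  have "K (\<omega> + of_int k *\<^sub>R axis i 1) = K ((\<omega> + of_int k *\<^sub>R axis i 1) + real (nat (-k)) *\<^sub>R axis i 1)"
    using K_int_shift_nat[OF per] by metis
  also have "(\<omega> + of_int k *\<^sub>R axis i 1) + real (nat (-k)) *\<^sub>R axis i 1 = \<omega>"
    using False by (simp add: algebra_simps)
  finally show ?thesis .
qed

lemma K_vec_shift:
  fixes K :: "real^'n::finite \<Rightarrow> 'b"
  assumes per: "\<forall>\<omega> i. K (\<omega> + axis i 1) = K \<omega>"
  shows "finite S \<Longrightarrow> K (\<omega> + (\<Sum>i\<in>S. of_int (z i) *\<^sub>R axis i 1)) = K \<omega>"
proof (induction S rule: finite_induct)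
  case empty then show ?case by simp
next
  case (insert x F)
  have "K (\<omega> + (\<Sum>i\<in>insert x F. of_int (z i) *\<^sub>R axis i 1))
     = K ((\<omega> + (\<Sum>i\<in>F. of_int (z i) *\<^sub>R axis i 1)) + of_int (z x) *\<^sub>R axis x 1)"
    using insert by (simp add: algebra_simps)
  also have "\<dots> = K \<omega>" using K_int_shift[OF per] insert by metis
  finally show ?case .
qed

lemma K_bounded:
  fixes K :: "real^'n::finite \<Rightarrow> 'b::real_normed_vector"
  assumes per: "\<forall>\<omega> i. K (\<omega> + axis i 1) = K \<omega>" and cont: "continuous_on UNIV K"
  shows "bounded (range K)"
proof -
  have "range K \<subseteq> K ` cbox 0 (\<chi> i. 1)"
  proof
    fix y assume "y \<in> range K"
    then obtain \<omega> where y: "y = K \<omega>" by auto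
    define z where "z = (\<lambda>i. \<lfloor>\<omega>$i\<rfloor>)"
    define f where "f = \<omega> - (\<chi> i. of_int (z i))"
    have "f \<in> cbox 0 (\<chi> i. 1)"
      by (auto simp: mem_box_cart f_def z_def) linarith+
    have "(\<Sum>i\<in>UNIV. of_int (z i) *\<^sub>R axis i (1::real)) = (\<chi> i. of_int (z i))"
      by (simp add: vec_eq_iff axis_def mult.commute[of "real_of_int _"] if_distrib[of "\<lambda>t. t * _"] cong: if_cong)
    then have "K \<omega> = K f"
      using K_vec_shift[OF per, of UNIV f z] by (simp add: f_def)
    then show "y \<in> K ` cbox 0 (\<chi> i. 1)" using \<open>f \<in> _\<close> y by auto
  qed
  moreover have "compact (K ` cbox 0 (\<chi> i. 1))"
    by (rule compact_continuous_image) (use cont continuous_on_subset in auto)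
  ultimately show ?thesis by (meson bounded_subset compact_imp_bounded)
qed

theorem proposition5p1:
  fixes A :: "'n::finite \<Rightarrow> (real^'d) \<times> (real^'d)"
    and K :: "real^'n \<Rightarrow> (real^'d) \<times> (real^'d)"
  assumes K_cont: "continuous_on UNIV K"
    and K_per: "\<forall>\<omega> i. K (\<omega> + axis i 1) = K \<omega>"
    and twist: "\<forall>\<omega>. symplectic_twist (\<lambda>x. x + K (\<omega> + (\<chi> i. A i \<bullet> x)))"
  shows "\<forall>\<omega>. quasiperiodic (\<lambda>y. hat_Phi (\<lambda>x. x + K (\<omega> + (\<chi> i. A i \<bullet> x))) y - y)"
proof
  fix \<omega> :: "real^'n"
  define Ax where "Ax = (\<lambda>x. (\<chi> i. A i \<bullet> x) :: real^'n)"
  define f where "f = (\<lambda>x. x + K (\<omega> + Ax x))"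
  define L where "L = (\<lambda>u::real^'d. Ax (u, 0))"
  define g where "g = (\<lambda>\<phi> u. u + fst (K (\<phi> + L u)))"
  have bijtw: "bij (\<lambda>q. fst ((q,p) + K (\<phi> + Ax (q,p))))" for \<phi> p
  proof -
    have "symplectic_twist (\<lambda>x. x + K (\<phi> + (\<chi> i. A i \<bullet> x)))" using twist by blast
    then have "C1_diffeo (\<lambda>q. fst ((q,p) + K (\<phi> + (\<chi> i. A i \<bullet> (q,p)))))"
      unfolding symplectic_twist_def by blast
    then show ?thesis unfolding C1_diffeo_def Ax_def by blast
  qed
  have bijg: "bij (g \<phi>)" for \<phi>
  proof -
    have "(\<lambda>q. fst ((q,0) + K (\<phi> + Ax (q,0)))) = g \<phi>"
      by (simp add: g_def L_def fun_eq_iff)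
    then show ?thesis using bijtw[where \<phi>=\<phi> and p=0] by simp
  qed
  define U where "U = (\<lambda>\<phi>. inv (g \<phi>) 0)"
  have gU: "g \<phi> (U \<phi>) = 0" for \<phi> using bijg[of \<phi>] unfolding U_def
    by (meson bij_inv_eq_iff)
  have Uuniq: "g \<phi> u = 0 \<Longrightarrow> u = U \<phi>" for \<phi> u using bijg[of \<phi>] unfolding U_def
    by (metis bij_inv_eq_iff)
  have Ax_split: "Ax (q, p) = Ax (Q, p) + L (q - Q)" for q p Q
    by (simp add: Ax_def L_def vec_eq_iff inner_prod_def inner_diff_right)
  define \<Gamma> where "\<Gamma> = (\<lambda>\<phi>. (U \<phi>, snd (K (\<phi> + L (U \<phi>)))))"
  have key: "hat_Phi f y - y = \<Gamma> (\<omega> + Ax y)" for y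
  proof -
    obtain Q p where y: "y = (Q,p)" by (cases y)
    define \<phi> where "\<phi> = \<omega> + Ax (Q,p)"
    have bq: "bij (\<lambda>q. fst (f (q, p)))" using bijtw[where \<phi>=\<omega> and p=p] by (simp add: f_def)
    have AxU: "Ax (Q + U \<phi>, p) = Ax (Q,p) + L (U \<phi>)" using Ax_split[of "Q + U \<phi>" p Q] by simp
    have "fst (f (Q + U \<phi>, p)) = Q"
      using gU[of \<phi>] AxU by (simp add: f_def g_def \<phi>_def algebra_simps)
    then have hq: "hat_q f Q p = Q + U \<phi>"
      unfolding hat_q_def using bij_inv_eq_iff[OF bq, of "Q + U \<phi>" Q] by simp
    have "hat_P f Q p = p + snd (K (\<phi> + L (U \<phi>)))"
      unfolding hat_P_def hq using AxU by (simp add: f_def \<phi>_def algebra_simps)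
    then show ?thesis using hq y by (simp add: hat_Phi_def \<Gamma>_def \<phi>_def)
  qed
  have \<Gamma>_per: "\<Gamma> (\<phi> + axis j 1) = \<Gamma> \<phi>" for \<phi> j
  proof -
    have Ks: "K (\<phi> + axis j 1 + z) = K (\<phi> + z)" for z
      using K_per by (metis add.commute add.left_commute)
    have "g (\<phi> + axis j 1) = g \<phi>" by (simp add: g_def fun_eq_iff Ks)
    then show ?thesis by (simp add: \<Gamma>_def U_def Ks)
  qed
  obtain B where B: "\<And>x. norm (K x) \<le> B"
    using K_bounded[OF K_per K_cont] by (auto simp: bounded_iff)
  have UB: "U \<phi> \<in> cball 0 B" for \<phi>
  proof -
    have "U \<phi> = - fst (K (\<phi> + L (U \<phi>)))" using gU[of \<phi>] by (simp add: g_def eq_neg_iff_add_eq_0)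
    then have "norm (U \<phi>) = norm (fst (K (\<phi> + L (U \<phi>))))" by (metis norm_minus_cancel)
    also have "\<dots> \<le> B" using norm_fst_le[of "fst (K (\<phi> + L (U \<phi>)))" "snd (K (\<phi> + L (U \<phi>)))"] B[of "\<phi> + L (U \<phi>)"] by simp
    finally show ?thesis by simp
  qed
  have Lcont: "continuous_on UNIV L"
    unfolding L_def Ax_def by (intro continuous_intros)
  have Ucont: "continuous_on UNIV U"
  proof (rule continuous_from_closed_graph[of "cball 0 B"])
    show "U \<in> UNIV \<rightarrow> cball 0 B" using UB by auto
    have "(\<lambda>x. (x, U x)) ` UNIV = {z. g (fst z) (snd z) = 0}"
      using gU Uuniq by (auto simp: image_iff)
    moreover have "closed {z. g (fst z) (snd z) = 0}"
      unfolding g_def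
      by (intro closed_Collect_eq continuous_intros continuous_on_compose2[OF K_cont]
          continuous_on_compose2[OF Lcont]) auto
    ultimately show "closed ((\<lambda>x. (x, U x)) ` UNIV)" by simp
  qed auto
  have \<Gamma>cont: "continuous_on UNIV \<Gamma>"
    unfolding \<Gamma>_def
    by (intro continuous_intros Ucont continuous_on_compose2[OF K_cont]
          continuous_on_compose2[OF Lcont]) auto
  define M where "M = CARD('n)"
  obtain e where e: "bij_betw e {0..<M} (UNIV::'n set)"
    using ex_bij_betw_nat_finite[of "UNIV::'n set"] by (auto simp: M_def)
  define ix where "ix = inv_into {0..<M} e"
  have ix_lt: "ix j < M" for j
    using e unfolding ix_def by (metis UNIV_I atLeastLessThan_iff bij_betw_imp_surj_on inv_into_into)
  have e_ix: "e (ix j) = j" for j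
    using e unfolding ix_def by (meson UNIV_I bij_betw_inv_into_right)
  have ix_e: "i < M \<Longrightarrow> ix (e i) = i" for i
    using e unfolding ix_def by (simp add: bij_betw_inv_into_left)
  define toV where "toV = (\<lambda>y::nat \<Rightarrow> real. (\<chi> j. y (ix j)) :: real^'n)"
  have toVcont: "continuous_on UNIV toV"
    unfolding toV_def by (intro continuous_intros continuous_on_compose2[OF continuous_on_product_coordinates]) auto
  show "quasiperiodic (\<lambda>y. hat_Phi (\<lambda>x. x + K (\<omega> + (\<chi> i. A i \<bullet> x))) y - y)"
    unfolding quasiperiodic_def
  proof (intro exI conjI allI impI)
    show "continuous_on {y. \<forall>i\<ge>M. y i = 0} (\<Gamma> \<circ> toV)"
      by (rule continuous_on_compose[OF continuous_on_subset[OF toVcont] continuous_on_subset[OF \<Gamma>cont]]) auto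
  next
    fix y :: "nat \<Rightarrow> real" and i assume "i < M"
    have "toV (y(i := y i + 1)) = toV y + axis (e i) 1"
      using ix_e[OF \<open>i < M\<close>] e_ix
      by (auto simp: toV_def vec_eq_iff axis_def)
    then show "(\<Gamma> \<circ> toV) (y(i := y i + 1)) = (\<Gamma> \<circ> toV) y" by (simp add: \<Gamma>_per)
  next
    fix x
    have "toV (\<lambda>i. if i < M then \<omega> $ e i + A (e i) \<bullet> x else 0) = \<omega> + Ax x"
      by (simp add: toV_def vec_eq_iff ix_lt e_ix Ax_def)
    then show "hat_Phi (\<lambda>x. x + K (\<omega> + (\<chi> i. A i \<bullet> x))) x - x
        = (\<Gamma> \<circ> toV) (\<lambda>i. if i < M then \<omega> $ e i + A (e i) \<bullet> x else 0)"
      using key[of x] by (simp add: f_def Ax_def)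
  qed
qed

end
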